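(* Let $n\ge1$, $R>0$, and let $f\colon\mathbb{R}^n\to(0,\infty)$ be a twice continuously differentiable convex function with $|t|^2+f(t)^2>R^2$ for all $t\in\mathbb{R}^n$. Let $$\alpha(t)=\frac{\langle t,\nabla f(t)\rangle-f(t)}{\sqrt{1+|\nabla f(t)|^2}},\qquad D=\{t\in\mathbb{R}^n\mid\alpha(t)<R\}.$$ Then the map $x\colon D\to\mathbb{R}^n$, $$x(t)=t+\frac{1}{2\sqrt{1+|\nabla f(t)|^2}}\cdot\frac{|t|^2+f(t)^2-R^2}{R-\alpha(t)}\,\nabla f(t),$$ is a bijection from $D$ onto $\mathbb{R}^n$ whose Jacobian determinant vanishes nowhere on $D$.
   Context: $\langle\cdot,\cdot\rangle$ and $|\cdot|$ are the Euclidean inner product and norm on $\mathbb{R}^n$. *)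

theory Defs
  imports "HOL-Analysis.Analysis"
begin

definition alpha_fun :: "(real^'n \<Rightarrow> real) \<Rightarrow> (real^'n \<Rightarrow> real^'n) \<Rightarrow> real^'n \<Rightarrow> real" where
  "alpha_fun f gf t = (t \<bullet> gf t - f t) / sqrt (1 + (norm (gf t))\<^sup>2)"

definition D_set :: "(real^'n \<Rightarrow> real) \<Rightarrow> (real^'n \<Rightarrow> real^'n) \<Rightarrow> real \<Rightarrow> (real^'n) set" where
  "D_set f gf R = {t. alpha_fun f gf t < R}"

definition x_map :: "(real^'n \<Rightarrow> real) \<Rightarrow> (real^'n \<Rightarrow> real^'n) \<Rightarrow> real \<Rightarrow> real^'n \<Rightarrow> real^'n" where
  "x_map f gf R t = t + ((1 / (2 * sqrt (1 + (norm (gf t))\<^sup>2))) *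
      (((norm t)\<^sup>2 + (f t)\<^sup>2 - R\<^sup>2) / (R - alpha_fun f gf t))) *\<^sub>R gf t"

end

theory Submission
  imports Defs
begin


lemma grad_ineq:
  fixes f :: "real^'n \<Rightarrow> real"
  assumes cv: "convex_on UNIV f" and df: "(f has_derivative (\<lambda>h. g \<bullet> h)) (at t)"
  shows "f t + g \<bullet> (y - t) \<le> f y"
proof -
  define d where "d = y - t"
  define \<phi> where "\<phi> u = f (t + u *\<^sub>R d)" for u
  have cvx: "convex_on UNIV \<phi>"
    unfolding convex_on_def
  proof (intro conjI ballI allI impI)
    fix a b u v :: real assume uv: "0 \<le> u" "0 \<le> v" "u + v = 1"
    have e: "u *\<^sub>R (t + a *\<^sub>R d) + v *\<^sub>R (t + b *\<^sub>R d) = (u + v) *\<^sub>R t + (u * a + v * b) *\<^sub>R d"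
      by (simp add: algebra_simps)
    have "\<phi> (u * a + v * b) = f (u *\<^sub>R (t + a *\<^sub>R d) + v *\<^sub>R (t + b *\<^sub>R d))"
      unfolding \<phi>_def e using uv by simp
    also have "\<dots> \<le> u * f (t + a *\<^sub>R d) + v * f (t + b *\<^sub>R d)"
      using cv uv unfolding convex_on_def by blast
    finally show "\<phi> (u *\<^sub>R a + v *\<^sub>R b) \<le> u * \<phi> a + v * \<phi> b"
      by (simp add: \<phi>_def)
  qed simp
  have l: "((\<lambda>u::real. t + u *\<^sub>R d) has_derivative (\<lambda>u. u *\<^sub>R d)) (at 0)"
    by (auto intro!: derivative_eq_intros)
  have df0: "(f has_derivative (\<lambda>h. g \<bullet> h)) (at (t + 0 *\<^sub>R d))" using df by simp
  have hd: "(\<phi> has_derivative (\<lambda>u. g \<bullet> (u *\<^sub>R d))) (at 0)"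
    unfolding \<phi>_def using has_derivative_compose[OF l df0] by simp
  have "(\<phi> has_field_derivative (g \<bullet> d)) (at 0)"
  proof -
    have eq: "(*) (g \<bullet> d) = (\<lambda>u. u * (g \<bullet> d))" by (rule ext) (simp add: mult.commute)
    show ?thesis unfolding has_field_derivative_def eq using hd by simp
  qed
  then have "(\<phi> has_field_derivative (g \<bullet> d)) (at 0 within UNIV)" by simp
  from convex_on_imp_above_tangent[OF cvx connected_UNIV _ _ this, of 1]
  have "\<phi> 1 - \<phi> 0 \<ge> g \<bullet> d" by simp
  then show ?thesis by (simp add: \<phi>_def d_def)
qed

lemma hess_psd:
  fixes f :: "real^'n \<Rightarrow> real"
  assumes cv: "convex_on UNIV f" and df: "\<forall>t. (f has_derivative (\<lambda>h. gf t \<bullet> h)) (at t)"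
    and dg: "(gf has_derivative H) (at t)"
  shows "0 \<le> h \<bullet> H h"
proof (rule ccontr)
  assume neg: "\<not> 0 \<le> h \<bullet> H h"
  define \<phi> where "\<phi> u = gf (t + u *\<^sub>R h) \<bullet> h" for u
  have mono: "\<phi> 0 \<le> \<phi> u" if "u > 0" for u
  proof -
    define a where "a = t + u *\<^sub>R h"
    have 1: "f t + gf t \<bullet> (a - t) \<le> f a" using grad_ineq[OF cv] df by blast
    have 2: "f a + gf a \<bullet> (t - a) \<le> f t" using grad_ineq[OF cv] df by blast
    have "0 \<le> (gf a - gf t) \<bullet> (a - t)" using 1 2 by (simp add: algebra_simps inner_diff_left inner_diff_right)
    also have "\<dots> = u * (\<phi> u - \<phi> 0)" by (simp add: a_def \<phi>_def algebra_simps inner_diff_left)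
    finally show ?thesis using that by (simp add: zero_le_mult_iff)
  qed
  have lin: "linear H" using dg has_derivative_linear by blast
  have l: "((\<lambda>u::real. t + u *\<^sub>R h) has_derivative (\<lambda>u. u *\<^sub>R h)) (at 0)"
    by (auto intro!: derivative_eq_intros)
  have dg0: "(gf has_derivative H) (at (t + 0 *\<^sub>R h))" using dg by simp
  have "((\<lambda>u. gf (t + u *\<^sub>R h)) has_derivative (\<lambda>u. H (u *\<^sub>R h))) (at 0)"
    using has_derivative_compose[OF l dg0] by simp
  then have "(\<phi> has_derivative (\<lambda>u. H (u *\<^sub>R h) \<bullet> h)) (at 0)"
    unfolding \<phi>_def by (auto intro!: derivative_eq_intros)
  moreover have "(\<lambda>u. H (u *\<^sub>R h) \<bullet> h) = (\<lambda>u. (h \<bullet> H h) * u)"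
    using linear_scale[OF lin] by (auto simp: inner_commute)
  ultimately have "(\<phi> has_real_derivative (h \<bullet> H h)) (at 0)"
    unfolding has_field_derivative_def by simp
  from DERIV_neg_dec_right[OF this] neg obtain d where "d > 0" "\<forall>u>0. u < d \<longrightarrow> \<phi> 0 > \<phi> (0 + u)"
    by force
  then have "\<phi> 0 > \<phi> (d/2)" by auto
  with mono[of "d/2"] \<open>d > 0\<close> show False by simp
qed



lemma dist_pair_eq: "dist (x::real^'n, s::real) (t, y) = sqrt ((norm (x - t))\<^sup>2 + (s - y)\<^sup>2)"
  unfolding dist_Pair_Pair by (simp add: dist_norm dist_real_def)

lemma norm_pair_eq: "norm (x::real^'n, s::real) = sqrt ((norm x)\<^sup>2 + s\<^sup>2)"
  by (simp add: norm_Pair)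

locale geo =
  fixes f :: "real^'n \<Rightarrow> real" and gf :: "real^'n \<Rightarrow> real^'n"
    and Hf :: "real^'n \<Rightarrow> real^'n \<Rightarrow> real^'n" and R :: real
  assumes R_pos: "R > 0"
    and f_pos: "\<And>t. f t > 0"
    and f_grad: "\<And>t. (f has_derivative (\<lambda>h. gf t \<bullet> h)) (at t)"
    and gf_deriv: "\<And>t. (gf has_derivative Hf t) (at t)"
    and f_convex: "convex_on UNIV f"
    and f_big: "\<And>t. (norm t)\<^sup>2 + (f t)\<^sup>2 > R\<^sup>2"
begin

definition W where "W t = sqrt (1 + (norm (gf t))\<^sup>2)"
definition E :: "((real^'n) \<times> real) set" where "E = {p. f (fst p) \<le> snd p}"
definition gfun where "gfun x s = infdist (x, s) E - (norm (x, s) - R)"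
definition config where "config x s t lam \<longleftrightarrow> lam > 0 \<and> x = t + lam *\<^sub>R gf t \<and> s = f t - lam
   \<and> norm (x, s) = R + lam * W t"

lemma W_pos: "W t > 0" unfolding W_def by (simp add: add_pos_nonneg)
lemma W_sq: "(W t)\<^sup>2 = 1 + (norm (gf t))\<^sup>2" unfolding W_def by (simp add: add_nonneg_nonneg)

lemma grad: "f t + gf t \<bullet> (y - t) \<le> f y"
  using grad_ineq[OF f_convex f_grad] .

lemma f_cont: "continuous_on UNIV f"
  using f_grad has_derivative_continuous continuous_at_imp_continuous_on by blast

lemma E_closed: "closed E"
proof -
  have "continuous_on UNIV (\<lambda>p::(real^'n) \<times> real. f (fst p))"
    by (intro continuous_on_compose2[OF f_cont] continuous_intros) auto
  then have "closed {p::(real^'n) \<times> real. f (fst p) \<le> snd p}"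
    by (intro closed_Collect_le) (auto intro: continuous_intros)
  then show ?thesis by (simp add: E_def)
qed

lemma E_convex: "convex E"
proof -
  have "E = epigraph UNIV f" by (auto simp: E_def epigraph_def)
  then show ?thesis using convex_epigraphI[OF f_convex] by simp
qed

lemma E_mem[simp]: "(t, y) \<in> E \<longleftrightarrow> f t \<le> y" by (simp add: E_def)

lemma E_ne: "E \<noteq> {}"
proof -
  have "(0, f 0) \<in> E" by simp
  then show ?thesis by blast
qed

lemma E_norm: assumes "p \<in> E" shows "norm p > R"
proof -
  obtain t y where p: "p = (t, y)" by (cases p)
  have "f t \<le> y" using assms p by simp
  moreover have "f t > 0" by (rule f_pos)
  ultimately have "(f t)\<^sup>2 \<le> y\<^sup>2" by (simp add: power_mono)
  then have "R\<^sup>2 < (norm t)\<^sup>2 + y\<^sup>2" using f_big[of t] by linarith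
  then have "sqrt (R\<^sup>2) < sqrt ((norm t)\<^sup>2 + y\<^sup>2)" by (rule real_sqrt_less_mono)
  then show ?thesis using R_pos by (simp add: p norm_pair_eq)
qed

lemma infdist_lower: "(x - t0) \<bullet> gf t0 + f t0 - s \<le> W t0 * infdist (x, s) E"
proof -
  have "((x - t0) \<bullet> gf t0 + f t0 - s) / W t0 \<le> infdist (x,s) E"
    unfolding infdist_notempty[OF E_ne]
  proof (rule cINF_greatest[OF E_ne])
    fix z assume "z \<in> E"
    obtain t' y' where z: "z = (t', y')" by (cases z)
    have fy: "f t' \<le> y'" using \<open>z\<in>E\<close> z by simp
    have gi: "f t0 + gf t0 \<bullet> (t' - t0) \<le> f t'" by (rule grad)
    have "(x - t0) \<bullet> gf t0 + f t0 - s \<le> inner ((x,s) - z) (gf t0, -1)"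
      using fy gi by (simp add: z inner_diff_left inner_diff_right inner_commute algebra_simps)
    also have "\<dots> \<le> norm ((x,s) - z) * norm (gf t0, -1::real)" by (rule norm_cauchy_schwarz)
    also have "norm (gf t0, -1::real) = W t0" by (simp add: norm_Pair W_def add.commute)
    finally show "((x - t0) \<bullet> gf t0 + f t0 - s) / W t0 \<le> dist (x,s) z"
      using W_pos[of t0] by (simp add: dist_norm divide_le_eq mult.commute)
  qed
  then show ?thesis using W_pos[of t0] by (simp add: divide_le_eq mult.commute)
qed

lemma infdist_neg: assumes "s < 0" shows "- s \<le> infdist (x, s) E"
  unfolding infdist_notempty[OF E_ne]
proof (rule cINF_greatest[OF E_ne])
  fix z assume "z \<in> E"
  obtain t' y' where z: "z = (t', y')" by (cases z)
  have "0 < f t'" by (rule f_pos)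
  also have "f t' \<le> y'" using \<open>z\<in>E\<close> z by simp
  finally have "- s \<le> dist s y'" using assms by (simp add: dist_real_def)
  also have "\<dots> \<le> dist (x, s) z" using dist_snd_le[of "(x,s)" z] z by simp
  finally show "- s \<le> dist (x, s) z" .
qed

lemma deriv_sqrt_sq:
  assumes "0 < A + (s0 - c)\<^sup>2"
  shows "((\<lambda>s. sqrt (A + (s - c)\<^sup>2)) has_real_derivative ((s0 - c) / sqrt (A + (s0 - c)\<^sup>2))) (at s0)"
  using assms by (auto intro!: derivative_eq_intros simp: field_simps)

lemma config_signs:
  assumes "config x s0 t0 lam"
  shows "gfun x s0 = 0" and "\<exists>d>0. \<forall>h>0. h < d \<longrightarrow> gfun x (s0 + h) < 0 \<and> gfun x (s0 - h) > 0"
proof -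
  define g where "g = gf t0"
  define w where "w = W t0"
  have lam: "lam > 0" and xe: "x = t0 + lam *\<^sub>R g" and se: "s0 = f t0 - lam"
    and nq: "norm (x, s0) = R + lam * w"
    using assms by (auto simp: config_def g_def w_def)
  have wpos: "w > 0" using W_pos by (simp add: w_def)
  have wsq: "w\<^sup>2 = 1 + (norm g)\<^sup>2" using W_sq by (simp add: w_def g_def)
  define A where "A = (norm (x - t0))\<^sup>2"
  have A: "A = lam\<^sup>2 * (norm g)\<^sup>2" using lam by (simp add: A_def xe power_mult_distrib)
  define B where "B = (norm x)\<^sup>2"
  define F where "F s = sqrt (A + (s - f t0)\<^sup>2) - sqrt (B + (s - 0)\<^sup>2) + R" for s
  define G where "G s = ((x - t0) \<bullet> g + f t0 - s) / w - sqrt (B + (s - 0)\<^sup>2) + R" for s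
  have r0: "sqrt (B + (s0 - 0)\<^sup>2) = R + lam * w" using nq by (simp add: norm_pair_eq B_def)
  have "A + (s0 - f t0)\<^sup>2 = (lam * w)\<^sup>2" using A wsq by (simp add: se power_mult_distrib algebra_simps)
  then have a0: "sqrt (A + (s0 - f t0)\<^sup>2) = lam * w" using lam wpos by simp
  have ip: "(x - t0) \<bullet> g = lam * (norm g)\<^sup>2" by (simp add: xe power2_norm_eq_inner)
  have F0: "F s0 = 0" using a0 r0 by (simp add: F_def)
  have "((x - t0) \<bullet> g + f t0 - s0) / w = lam * w"
    using ip wsq wpos by (simp add: se field_simps power2_eq_square)
  then have G0: "G s0 = 0" using r0 by (simp add: G_def)
  have Fle: "gfun x s \<le> F s" for s
  proof -
    have "infdist (x, s) E \<le> dist (x, s) (t0, f t0)" by (rule infdist_le) simp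
    then show ?thesis by (simp add: gfun_def F_def dist_pair_eq A_def B_def norm_pair_eq)
  qed
  have Gle: "G s \<le> gfun x s" for s
  proof -
    have "((x - t0) \<bullet> g + f t0 - s) / w \<le> infdist (x, s) E"
      using infdist_lower[of x t0 s] wpos by (simp add: g_def w_def divide_le_eq mult.commute)
    then show ?thesis by (simp add: gfun_def G_def B_def norm_pair_eq)
  qed
  have "0 < R + f t0 * w" using R_pos f_pos[of t0] wpos by (simp add: add_pos_pos)
  then have "0 < (R + lam * w) + w * s0" by (simp add: se algebra_simps)
  then have neg: "-1/w - s0/(R + lam*w) < 0"
    using wpos lam R_pos by (simp add: field_simps add_pos_pos)
  have pA: "0 < A + (s0 - f t0)\<^sup>2" using a0 lam wpos
    by (metis mult_pos_pos real_sqrt_gt_0_iff)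
  have pB: "0 < B + (s0 - 0)\<^sup>2" using r0 lam wpos R_pos
    by (metis add_pos_pos mult_pos_pos real_sqrt_gt_0_iff)
  have dF: "(F has_real_derivative (-1/w - s0/(R + lam*w))) (at s0)"
  proof -
    have "(F has_real_derivative ((s0 - f t0) / sqrt (A + (s0 - f t0)\<^sup>2) - (s0 - 0) / sqrt (B + (s0 - 0)\<^sup>2) + 0)) (at s0)"
      unfolding F_def by (intro derivative_intros deriv_sqrt_sq pA pB)
    then show ?thesis using a0 r0 lam wpos by (simp add: se)
  qed
  have dG: "(G has_real_derivative (-1/w - s0/(R + lam*w))) (at s0)"
  proof -
    have "(G has_real_derivative ((0 + 0 - 1) / w - (s0 - 0) / sqrt (B + (s0 - 0)\<^sup>2) + 0)) (at s0)"
      unfolding G_def by (intro derivative_intros deriv_sqrt_sq pB) (use wpos in \<open>auto intro!: derivative_eq_intros\<close>)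
    then show ?thesis using r0 by simp
  qed
  obtain d1 where d1: "d1 > 0" "\<forall>h>0. h < d1 \<longrightarrow> F s0 > F (s0 + h)"
    using DERIV_neg_dec_right[OF dF neg] by blast
  obtain d2 where d2: "d2 > 0" "\<forall>h>0. h < d2 \<longrightarrow> G s0 < G (s0 - h)"
    using DERIV_neg_dec_left[OF dG neg] by blast
  show "gfun x s0 = 0" using Fle[of s0] Gle[of s0] F0 G0 by simp
  show "\<exists>d>0. \<forall>h>0. h < d \<longrightarrow> gfun x (s0 + h) < 0 \<and> gfun x (s0 - h) > 0"
  proof (intro exI[of _ "min d1 d2"] conjI allI impI)
    show "0 < min d1 d2" using d1 d2 by simp
    fix h :: real assume h: "0 < h" "h < min d1 d2"
    show "gfun x (s0 + h) < 0" using Fle[of "s0 + h"] d1 h F0 by force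
    show "gfun x (s0 - h) > 0" using Gle[of "s0 - h"] d2 h G0 by force
  qed
qed

lemma zero_config:
  assumes "gfun x s = 0" shows "\<exists>t lam. config x s t lam"
proof -
  define q where "q = (x, s)"
  define p where "p = closest_point E q"
  have pE: "p \<in> E" and pmin: "\<forall>z\<in>E. dist q p \<le> dist q z"
    using closest_point_exists[OF E_closed E_ne] by (auto simp: p_def)
  have inf_eq: "infdist q E = dist q p"
  proof (rule antisym)
    show "infdist q E \<le> dist q p" by (rule infdist_le[OF pE])
    show "dist q p \<le> infdist q E" unfolding infdist_notempty[OF E_ne]
      by (rule cINF_greatest[OF E_ne]) (use pmin in auto)
  qed
  have nq: "norm q = R + dist q p" using assms inf_eq by (simp add: gfun_def q_def)
  have qE: "q \<notin> E"
  proof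
    assume "q \<in> E"
    then have "norm q > R" by (rule E_norm)
    moreover have "infdist q E = 0" using \<open>q\<in>E\<close> by simp
    ultimately show False using nq inf_eq by simp
  qed
  obtain t y where p: "p = (t, y)" by (cases p)
  have fy: "f t \<le> y" using pE p by simp
  have dot: "inner (q - p) (z - p) \<le> 0" if "z \<in> E" for z
    using any_closest_point_dot[OF E_convex E_closed pE that pmin] .
  have sy: "s \<le> y" using dot[of "(t, y+1)"] fy by (simp add: q_def p)
  have sy': "s \<noteq> y"
  proof
    assume "s = y"
    have "(x, max (f x) y) \<in> E" by simp
    from dot[OF this] have "(norm (x - t))\<^sup>2 \<le> 0" by (simp add: q_def p \<open>s = y\<close> power2_norm_eq_inner)
    then have "x = t" by simp
    then have "q = p" using \<open>s=y\<close> by (simp add: q_def p)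
    with qE pE show False by simp
  qed
  have yf: "y = f t"
  proof -
    have "(s - y) * (f t - y) \<le> 0" using dot[of "(t, f t)"] by (simp add: q_def p)
    then have "f t - y \<ge> 0" using sy sy' by (simp add: mult_le_0_iff)
    then show ?thesis using fy by simp
  qed
  define lam where "lam = f t - s"
  have lam: "lam > 0" using sy sy' yf by (simp add: lam_def)
  define hh where "hh t' = (x - t') \<bullet> (x - t') + (s - f t')\<^sup>2" for t'
  have hh_dist: "hh t' = (dist q (t', f t'))\<^sup>2" for t'
    by (simp add: hh_def q_def dist_pair_eq power2_norm_eq_inner)
  have hmin: "\<forall>t'\<in>UNIV. hh t \<le> hh t'"
  proof
    fix t' :: "real^'n"
    have "dist q p \<le> dist q (t', f t')" using pmin by simp
    then have "(dist q p)\<^sup>2 \<le> (dist q (t', f t'))\<^sup>2" by (simp add: power_mono)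
    then show "hh t \<le> hh t'" using hh_dist p yf by simp
  qed
  define v where "v = x - t - lam *\<^sub>R gf t"
  have dh: "(hh has_derivative (\<lambda>k. (-k) \<bullet> (x - t) + (x - t) \<bullet> (-k) + 2 * (s - f t) * (- (gf t \<bullet> k)))) (at t)"
    unfolding hh_def by (auto intro!: derivative_eq_intros f_grad)
  from differential_zero_maxmin[OF _ open_UNIV dh] hmin
  have "(\<lambda>k. (-k) \<bullet> (x - t) + (x - t) \<bullet> (-k) + 2 * (s - f t) * (- (gf t \<bullet> k))) = (\<lambda>k. 0)" by blast
  then have e1: "(-v) \<bullet> (x - t) + (x - t) \<bullet> (-v) + 2 * (s - f t) * (- (gf t \<bullet> v)) = 0" by (rule fun_cong)
  have e2: "v \<bullet> v = v \<bullet> (x - t) - lam * (gf t \<bullet> v)"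
    by (subst (2) v_def) (simp add: inner_diff_right inner_commute)
  have "v \<bullet> v = 0" using e1 e2 by (simp add: lam_def inner_commute algebra_simps del: inner_eq_zero_iff)
  then have "v = 0" by simp
  then have xe: "x = t + lam *\<^sub>R gf t" by (simp add: v_def algebra_simps)
  have n1: "norm (x - t) = lam * norm (gf t)" using lam by (simp add: xe)
  have "(norm (x - t))\<^sup>2 + (s - f t)\<^sup>2 = (lam * W t)\<^sup>2"
    unfolding n1 power_mult_distrib W_sq by (simp add: lam_def power2_eq_square algebra_simps)
  then have dqp: "dist q p = lam * W t"
    using lam W_pos[of t] by (simp add: q_def p yf dist_pair_eq)
  have "config x s t lam" unfolding config_def
    using lam xe nq dqp by (auto simp: lam_def q_def)
  then show ?thesis by blast
qed

lemma gfun_cont: "isCont (gfun x) s"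
  unfolding gfun_def[abs_def] by (intro continuous_intros)

lemma gfun_cont_on: "continuous_on UNIV (gfun x)"
  using gfun_cont continuous_at_imp_continuous_on by blast

lemma zero_signs:
  assumes "gfun x s0 = 0"
  shows "\<exists>d>0. \<forall>h>0. h < d \<longrightarrow> gfun x (s0 + h) < 0 \<and> gfun x (s0 - h) > 0"
  using zero_config[OF assms] config_signs(2) by blast

lemma zero_lt_False:
  assumes z1: "gfun x s1 = 0" and z2: "gfun x s2 = 0" and lt: "s1 < s2"
  shows False
proof -
  obtain d1 where d1: "d1 > 0" "\<forall>h>0. h < d1 \<longrightarrow> gfun x (s1 + h) < 0 \<and> gfun x (s1 - h) > 0"
    using zero_signs[OF z1] by blast
  define a where "a = s1 + min (d1/2) ((s2 - s1)/2)"
  have ga: "gfun x a < 0" using d1 lt unfolding a_def by auto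
  have as2: "a < s2" using lt unfolding a_def by (auto simp: min_def field_simps)
  define Z where "Z = {c. a \<le> c \<and> c \<le> s2 \<and> gfun x c = 0}"
  have s2Z: "s2 \<in> Z" using as2 z2 by (simp add: Z_def)
  have "closed {c. a \<le> c \<and> c \<le> s2 \<and> gfun x c = 0}"
    by (intro closed_Collect_conj closed_Collect_le closed_Collect_eq gfun_cont_on continuous_intros)
  then have clZ: "closed Z" by (simp add: Z_def)
  have bdd: "bdd_below Z" unfolding Z_def bdd_below_def by auto
  define c where "c = Inf Z"
  have cZ: "c \<in> Z" unfolding c_def using closed_contains_Inf[OF _ bdd clZ] s2Z by blast
  have ac: "a < c" using cZ ga unfolding Z_def by (cases "a = c") auto
  obtain d where d: "d > 0" "\<forall>h>0. h < d \<longrightarrow> gfun x (c + h) < 0 \<and> gfun x (c - h) > 0"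
    using zero_signs[of x c] cZ unfolding Z_def by blast
  define b where "b = c - min (d/2) ((c - a)/2)"
  have gb: "gfun x b > 0" using d ac unfolding b_def by auto
  have ab: "a < b" "b < c" using ac d unfolding b_def by (auto simp: min_def field_simps)
  obtain z where z: "a \<le> z" "z \<le> b" "gfun x z = 0"
    using IVT[of "gfun x" a 0 b] ga gb ab gfun_cont by force
  have "z \<in> Z" using z ab cZ unfolding Z_def by auto
  then have "c \<le> z" unfolding c_def using bdd by (rule cInf_lower)
  then show False using z ab by simp
qed

lemma zero_unique: "gfun x s1 = 0 \<Longrightarrow> gfun x s2 = 0 \<Longrightarrow> s1 = s2"
  using zero_lt_False by (metis linorder_neqE_linordered_idom)

lemma zero_exists: "\<exists>s. gfun x s = 0"
proof -
  define a where "a = - ((norm x)\<^sup>2 / R + 1)"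
  define b where "b = max (f x) (R + 1)"
  have "(norm x)\<^sup>2 / R \<ge> 0" using R_pos by simp
  then have a0: "a < 0" unfolding a_def by linarith
  have "(norm x)\<^sup>2 + a\<^sup>2 < (R - a)\<^sup>2"
  proof -
    have "(norm x)\<^sup>2 < R * R + 2 * R * (- a)"
      using R_pos by (simp add: a_def field_simps add_pos_nonneg)
    then show ?thesis by (simp add: power2_eq_square algebra_simps)
  qed
  then have "sqrt ((norm x)\<^sup>2 + a\<^sup>2) < sqrt ((R - a)\<^sup>2)" by (rule real_sqrt_less_mono)
  then have "norm (x, a) < R - a" using a0 R_pos by (simp add: norm_pair_eq)
  moreover have "- a \<le> infdist (x, a) E" by (rule infdist_neg[OF a0])
  ultimately have ga: "gfun x a > 0" by (simp add: gfun_def)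
  have "(x, b) \<in> E" by (simp add: b_def)
  then have i0: "infdist (x, b) E = 0" by simp
  have bR: "R < b" by (simp add: b_def)
  have "sqrt (b\<^sup>2) \<le> sqrt ((norm x)\<^sup>2 + b\<^sup>2)" by (rule real_sqrt_le_mono) simp
  moreover have "sqrt (b\<^sup>2) = b" using bR R_pos by simp
  ultimately have "R < norm (x, b)" using bR unfolding norm_pair_eq by linarith
  then have gb: "gfun x b < 0" using i0 by (simp add: gfun_def)
  have "a \<le> b" using a0 R_pos by (simp add: b_def)
  then show ?thesis using IVT2[of "gfun x" b 0 a] ga gb gfun_cont by force
qed

definition Nf where "Nf t = (norm t)\<^sup>2 + (f t)\<^sup>2 - R\<^sup>2"
definition Mf where "Mf t = R * W t - t \<bullet> gf t + f t"

lemma Nf_pos: "Nf t > 0" using f_big[of t] by (simp add: Nf_def)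

lemma alpha_eq: "alpha_fun f gf t = (t \<bullet> gf t - f t) / W t"
  by (simp add: alpha_fun_def W_def)

lemma D_iff: "t \<in> D_set f gf R \<longleftrightarrow> Mf t > 0"
  using W_pos[of t] by (simp add: D_set_def alpha_eq Mf_def divide_less_eq algebra_simps)

lemma x_map_eq: "x_map f gf R t = t + (Nf t / (2 * Mf t)) *\<^sub>R gf t"
proof -
  have w: "W t > 0" by (rule W_pos)
  have e: "R - alpha_fun f gf t = Mf t / W t" using w by (simp add: alpha_eq Mf_def field_simps)
  have "1 / (2 * sqrt (1 + (norm (gf t))\<^sup>2)) * (((norm t)\<^sup>2 + (f t)\<^sup>2 - R\<^sup>2) / (R - alpha_fun f gf t))
        = Nf t / (2 * Mf t)"
    unfolding e W_def[symmetric] Nf_def[symmetric] using w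
    by (cases "Mf t = 0") (simp_all add: field_simps)
  then show ?thesis by (simp add: x_map_def)
qed

lemma key_alg: "(norm (t + lam *\<^sub>R gf t))\<^sup>2 + (f t - lam)\<^sup>2
   = R\<^sup>2 + Nf t + 2 * lam * (t \<bullet> gf t - f t) + lam\<^sup>2 * (W t)\<^sup>2"
  unfolding W_sq Nf_def power2_norm_eq_inner
  by (simp add: inner_add_left inner_add_right inner_commute power2_eq_square algebra_simps)

lemma config_D:
  assumes "config x s t lam"
  shows "t \<in> D_set f gf R" and "x_map f gf R t = x"
proof -
  have lam: "lam > 0" and xe: "x = t + lam *\<^sub>R gf t" and se: "s = f t - lam"
    and nq: "norm (x, s) = R + lam * W t" using assms by (auto simp: config_def)
  have "(norm x)\<^sup>2 + s\<^sup>2 = (R + lam * W t)\<^sup>2"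
  proof -
    have "(norm x)\<^sup>2 + s\<^sup>2 = (sqrt ((norm x)\<^sup>2 + s\<^sup>2))\<^sup>2" by simp
    also have "\<dots> = (R + lam * W t)\<^sup>2" using nq by (simp add: norm_pair_eq)
    finally show ?thesis .
  qed
  then have "R\<^sup>2 + Nf t + 2 * lam * (t \<bullet> gf t - f t) + lam\<^sup>2 * (W t)\<^sup>2 = (R + lam * W t)\<^sup>2"
    using key_alg[of t lam] by (simp add: xe se)
  then have NM: "Nf t = 2 * lam * Mf t" by (simp add: Mf_def power2_eq_square algebra_simps)
  then have M: "Mf t > 0" using Nf_pos[of t] lam by (simp add: zero_less_mult_iff)
  then show "t \<in> D_set f gf R" by (simp add: D_iff)
  have "Nf t / (2 * Mf t) = lam" using NM M by simp
  then show "x_map f gf R t = x" by (simp add: x_map_eq xe)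
qed

lemma D_config:
  assumes "t \<in> D_set f gf R"
  shows "config (x_map f gf R t) (f t - Nf t / (2 * Mf t)) t (Nf t / (2 * Mf t))"
proof -
  define lam where "lam = Nf t / (2 * Mf t)"
  have M: "Mf t > 0" using assms by (simp add: D_iff)
  have lam: "lam > 0" using M Nf_pos[of t] by (simp add: lam_def)
  have NM: "Nf t = 2 * lam * Mf t" using M by (simp add: lam_def)
  have xe: "x_map f gf R t = t + lam *\<^sub>R gf t" by (simp add: x_map_eq lam_def)
  have "(norm (x_map f gf R t))\<^sup>2 + (f t - lam)\<^sup>2 = (R + lam * W t)\<^sup>2"
    unfolding xe key_alg NM by (simp add: Mf_def power2_eq_square algebra_simps)
  then have "norm (x_map f gf R t, f t - lam) = R + lam * W t"
    using lam W_pos[of t] R_pos by (simp add: norm_pair_eq)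
  then show ?thesis unfolding lam_def[symmetric] config_def using lam xe by simp
qed

lemma config_dist:
  assumes "config x s t lam"
  shows "dist (x, s) (t, f t) = lam * W t" and "infdist (x, s) E = lam * W t"
proof -
  have lam: "lam > 0" and xe: "x = t + lam *\<^sub>R gf t" and se: "s = f t - lam"
    and nq: "norm (x, s) = R + lam * W t" using assms by (auto simp: config_def)
  have n1: "norm (x - t) = lam * norm (gf t)" using lam by (simp add: xe)
  have "(norm (x - t))\<^sup>2 + (s - f t)\<^sup>2 = (lam * W t)\<^sup>2"
    unfolding n1 power_mult_distrib W_sq by (simp add: se power2_eq_square algebra_simps)
  then show "dist (x, s) (t, f t) = lam * W t"
    using lam W_pos[of t] by (simp add: dist_pair_eq)
  show "infdist (x, s) E = lam * W t"
    using config_signs(1)[OF assms] nq by (simp add: gfun_def)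
qed

lemma bij: "bij_betw (x_map f gf R) (D_set f gf R) UNIV"
  unfolding bij_betw_def
proof
  show "inj_on (x_map f gf R) (D_set f gf R)"
  proof (rule inj_onI)
    fix t1 t2 assume t1: "t1 \<in> D_set f gf R" and t2: "t2 \<in> D_set f gf R"
      and eq: "x_map f gf R t1 = x_map f gf R t2"
    define x where "x = x_map f gf R t1"
    obtain s1 l1 where c1: "config x s1 t1 l1" using D_config[OF t1] unfolding x_def by blast
    obtain s2 l2 where c2: "config x s2 t2 l2" using D_config[OF t2] unfolding x_def eq by blast
    have "s1 = s2" using zero_unique config_signs(1)[OF c1] config_signs(1)[OF c2] by blast
    then have c2': "config x s1 t2 l2" using c2 by simp
    have m1: "\<forall>z\<in>E. dist (x, s1) (t1, f t1) \<le> dist (x, s1) z"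
      using config_dist[OF c1] infdist_le[of _ E "(x, s1)"] by metis
    have m2: "\<forall>z\<in>E. dist (x, s1) (t2, f t2) \<le> dist (x, s1) z"
      using config_dist[OF c2'] infdist_le[of _ E "(x, s1)"] by metis
    have "(t1, f t1) = (t2, f t2)"
      by (rule any_closest_point_unique[OF E_convex E_closed _ _ m1 m2]) simp_all
    then show "t1 = t2" by simp
  qed
  show "x_map f gf R ` D_set f gf R = UNIV"
  proof (intro set_eqI iffI)
    fix x :: "real^'n" assume "x \<in> UNIV"
    obtain s where "gfun x s = 0" using zero_exists by blast
    then obtain t lam where c: "config x s t lam" using zero_config by blast
    show "x \<in> x_map f gf R ` D_set f gf R"
      using config_D[OF c] by (metis image_eqI)
  qed simp
qed

end

context geo begin

lemma dN: "(Nf has_derivative (\<lambda>h. 2 * (t \<bullet> h) + 2 * f t * (gf t \<bullet> h))) (at t)"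
proof -
  have e: "Nf = (\<lambda>t. t \<bullet> t + f t * f t - R\<^sup>2)"
    by (rule ext) (simp add: Nf_def power2_eq_square norm_eq_sqrt_inner)
  show ?thesis unfolding e
    by (rule has_derivative_eq_rhs, (rule derivative_intros f_grad)+) (auto simp: inner_commute)
qed

lemma dW: "(W has_derivative (\<lambda>h. (gf t \<bullet> Hf t h) / W t)) (at t)"
proof -
  have e: "W = (\<lambda>t. sqrt (1 + gf t \<bullet> gf t))"
    by (rule ext) (simp add: W_def power2_norm_eq_inner)
  have p: "0 < 1 + gf t \<bullet> gf t" by (simp add: add_pos_nonneg)
  show ?thesis unfolding e
    by (rule has_derivative_eq_rhs, (rule derivative_intros gf_deriv p)+) (auto simp: inner_commute field_simps)
qed

lemma dM: "(Mf has_derivative (\<lambda>h. R * ((gf t \<bullet> Hf t h) / W t) - t \<bullet> Hf t h)) (at t)"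
proof -
  have e: "Mf = (\<lambda>t. R * W t - t \<bullet> gf t + f t)"
    by (rule ext) (simp add: Mf_def)
  show ?thesis unfolding e
    by (rule has_derivative_eq_rhs, (rule derivative_intros f_grad gf_deriv dW)+) (auto simp: inner_commute)
qed

definition lamd where "lamd t h = ((2 * (t \<bullet> h) + 2 * f t * (gf t \<bullet> h))
    - 2 * (Nf t / (2 * Mf t)) * (R * ((gf t \<bullet> Hf t h) / W t) - t \<bullet> Hf t h)) / (2 * Mf t)"

lemma dX:
  assumes M: "Mf t \<noteq> 0"
  shows "(x_map f gf R has_derivative
     (\<lambda>h. h + lamd t h *\<^sub>R gf t + (Nf t / (2 * Mf t)) *\<^sub>R Hf t h)) (at t)"
proof -
  have e: "x_map f gf R = (\<lambda>t. t + (Nf t / (2 * Mf t)) *\<^sub>R gf t)"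
    by (rule ext) (simp add: x_map_eq)
  have dl: "((\<lambda>t. Nf t / (2 * Mf t)) has_derivative lamd t) (at t)"
    by (rule has_derivative_eq_rhs, (rule derivative_intros dN dM)+)
       (use M in \<open>auto simp: lamd_def field_simps\<close>)
  show ?thesis unfolding e
    by (rule has_derivative_eq_rhs, (rule derivative_intros dl gf_deriv)+) (auto simp: algebra_simps)
qed

lemma dX_kernel:
  assumes D: "t \<in> D_set f gf R"
    and z: "h + lamd t h *\<^sub>R gf t + (Nf t / (2 * Mf t)) *\<^sub>R Hf t h = 0"
  shows "h = 0"
proof -
  define g where "g = gf t"
  define H where "H = Hf t h"
  define lam where "lam = Nf t / (2 * Mf t)"
  define c where "c = lamd t h"
  define w where "w = W t"
  define M where "M = Mf t"
  define ff where "ff = f t"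
  have Mp: "M > 0" using D by (simp add: D_iff M_def)
  have lp: "lam > 0" using Mp Nf_pos[of t] by (simp add: lam_def M_def)
  have wp: "w > 0" using W_pos by (simp add: w_def)
  have fp: "ff > 0" using f_pos by (simp add: ff_def)
  have wsq: "w * w = 1 + g \<bullet> g" using W_sq[of t] by (simp add: w_def g_def power2_eq_square norm_eq_sqrt_inner)
  have Md: "M = R * w - t \<bullet> g + ff" by (simp add: M_def Mf_def w_def g_def ff_def)
  have eq: "h + c *\<^sub>R g + lam *\<^sub>R H = 0" using z by (simp add: c_def g_def lam_def H_def)
  have E1: "g \<bullet> h + c * (g \<bullet> g) + lam * (g \<bullet> H) = 0"
    using arg_cong[OF eq, of "\<lambda>v. g \<bullet> v"] by (simp add: inner_add_right)
  have E2: "t \<bullet> h + c * (t \<bullet> g) + lam * (t \<bullet> H) = 0"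
    using arg_cong[OF eq, of "\<lambda>v. t \<bullet> v"] by (simp add: inner_add_right)
  have E3: "h \<bullet> h + c * (g \<bullet> h) + lam * (h \<bullet> H) = 0"
    using arg_cong[OF eq, of "\<lambda>v. h \<bullet> v"] by (simp add: inner_add_right inner_commute)
  have E4: "c * (2 * M) = 2 * (t \<bullet> h) + 2 * ff * (g \<bullet> h) - 2 * lam * (R * ((g \<bullet> H) / w) - t \<bullet> H)"
    using Mp by (simp add: c_def lamd_def lam_def M_def ff_def g_def H_def w_def)
  have E4': "c * M * w = (t \<bullet> h) * w + ff * (g \<bullet> h) * w - R * (lam * (g \<bullet> H)) + (lam * (t \<bullet> H)) * w"
  proof -
    have "c * M * w = (c * (2 * M)) * w / 2" by simp
    also have "\<dots> = (2 * (t \<bullet> h) + 2 * ff * (g \<bullet> h) - 2 * lam * (R * ((g \<bullet> H) / w) - t \<bullet> H)) * w / 2"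
      by (simp only: E4)
    also have "\<dots> = (t \<bullet> h) * w + ff * (g \<bullet> h) * w - R * (lam * (g \<bullet> H)) + (lam * (t \<bullet> H)) * w"
      using wp by (simp add: field_simps)
    finally show ?thesis .
  qed
  have s1: "lam * (g \<bullet> H) = - (g \<bullet> h) - c * (g \<bullet> g)" using E1 by linarith
  have s2: "lam * (t \<bullet> H) = - (t \<bullet> h) - c * (t \<bullet> g)" using E2 by linarith
  have E5: "c * M * w = ff * (g \<bullet> h) * w + R * (g \<bullet> h) + c * (R * (g \<bullet> g) - (t \<bullet> g) * w)"
    using E4' unfolding s1 s2 by (simp add: algebra_simps)
  have Mw: "M * w = R * (1 + g \<bullet> g) - (t \<bullet> g) * w + ff * w"
    unfolding Md using wsq by (simp add: algebra_simps)
  have "c * (R + ff * w) = (g \<bullet> h) * (R + ff * w)"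
  proof -
    have "c * (M * w) = c * (R * (1 + g \<bullet> g) - (t \<bullet> g) * w + ff * w)" by (simp only: Mw)
    then show ?thesis using E5 by (simp add: algebra_simps)
  qed
  moreover have "R + ff * w > 0" using R_pos fp wp by (simp add: add_pos_pos)
  ultimately have ca: "c = g \<bullet> h" by simp
  have K: "0 \<le> h \<bullet> H" unfolding H_def by (rule hess_psd[OF f_convex _ gf_deriv]) (use f_grad in blast)
  have "h \<bullet> h + (g \<bullet> h)\<^sup>2 + lam * (h \<bullet> H) = 0" using E3 ca by (simp add: power2_eq_square)
  moreover have "0 \<le> (g \<bullet> h)\<^sup>2" by simp
  moreover have "0 \<le> lam * (h \<bullet> H)" using lp K by simp
  moreover have "0 \<le> h \<bullet> h" by simp
  ultimately have "h \<bullet> h = 0" by linarith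
  then show "h = 0" by simp
qed

end


theorem theorem10:
  fixes f :: "real^'n \<Rightarrow> real" and gf :: "real^'n \<Rightarrow> real^'n"
    and Hf :: "real^'n \<Rightarrow> real^'n \<Rightarrow> real^'n" and R :: real
  assumes R_pos: "R > 0"
    and f_pos: "\<forall>t. f t > 0"
    and f_grad: "\<forall>t. (f has_derivative (\<lambda>h. gf t \<bullet> h)) (at t)"
    and gf_deriv: "\<forall>t. (gf has_derivative Hf t) (at t)"
    and Hf_cont: "continuous_on UNIV (\<lambda>t. matrix (Hf t))"
    and f_convex: "convex_on UNIV f"
    and f_big: "\<forall>t. (norm t)\<^sup>2 + (f t)\<^sup>2 > R\<^sup>2"
  shows "bij_betw (x_map f gf R) (D_set f gf R) UNIV \<and>
    (\<forall>t \<in> D_set f gf R. \<exists>x'. (x_map f gf R has_derivative x') (at t) \<and> det (matrix x') \<noteq> 0)"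
proof -
  interpret geo f gf Hf R using assms by unfold_locales auto
  have "\<exists>x'. (x_map f gf R has_derivative x') (at t) \<and> det (matrix x') \<noteq> 0"
    if t: "t \<in> D_set f gf R" for t
  proof -
    define x' where "x' = (\<lambda>h. h + lamd t h *\<^sub>R gf t + (Nf t / (2 * Mf t)) *\<^sub>R Hf t h)"
    have M: "Mf t \<noteq> 0" using t by (simp add: D_iff)
    have d: "(x_map f gf R has_derivative x') (at t)" unfolding x'_def by (rule dX[OF M])
    have lin: "linear x'" using d has_derivative_linear by blast
    have "inj x'"
    proof (rule injI)
      fix a b assume "x' a = x' b"
      then have "x' (a - b) = 0" using linear_diff[OF lin] by simp
      then have "a - b = 0" using dX_kernel[OF t] unfolding x'_def by blast
      then show "a = b" by simp
    qed
    then have "det (matrix x') \<noteq> 0" using det_nz_iff_inj[OF lin] by simp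
    with d show ?thesis by blast
  qed
  then show ?thesis using bij by blast
qed

end
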